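(* Let $\boldsymbol\lambda$ be a partition with at most $N$ parts, $d_i=\lambda_i+N-i$, and let $F_{ij}\in\mathcal O_{\boldsymbol\lambda}$ be as defined in the context. Set $F_{00}=1$ and $\chi(\alpha)=\sum_{i=0}^NF_{ii}\prod_{j=0}^{N-i-1}(\alpha-j)$. Then $\chi(\alpha)=\prod_{i=1}^N(\alpha-d_i)$.
   Context: A partition with at most $N$ parts is a sequence of integers $\lambda_1\ge\dots\ge\lambda_N\ge0$; $|\boldsymbol\lambda|=\sum\lambda_i$. Put $d_i=\lambda_i+N-i$ and $P=\{d_1,\dots,d_N\}$. Let $\mathcal O_{\boldsymbol\lambda}=\mathbb C[f_{ij}:1\le i\le N,\ 1\le j\le d_i,\ d_i-j\notin P]$ be the polynomial algebra in the indicated variables (the coordinate ring of the Schubert cell of $N$-dimensional spaces of polynomials whose set of degrees is $P$), and let $f_i(u)=u^{d_i}+\sum_{1\le j\le d_i,\ d_i-j\notin P}f_{ij}u^{d_i-j}$. Let $\operatorname{Wr}(g_1,\dots,g_N)=\det(g_i^{(j-1)})_{i,j=1}^N$ be the Wronskian. For a square matrix $A=(a_{ij})$ with possibly noncommuting entries, $\operatorname{rdet}A=\sum_{\sigma}\operatorname{sgn}(\sigma)a_{1\sigma(1)}a_{2\sigma(2)}\cdots$. Let $\partial=d/du$ and define the differential operator $\mathcal D^{\mathcal O}_{\boldsymbol\lambda}=\frac1{\operatorname{Wr}(f_1,\dots,f_N)}\operatorname{rdet}\begin{pmatrix}f_1&f_1'&\dots&f_1^{(N)}\\ \vdots&&&\vdots\\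 f_N&f_N'&\dots&f_N^{(N)}\\ 1&\partial&\dots&\partial^N\end{pmatrix}=\partial^N+\sum_{i=1}^NF_i(u)\partial^{N-i}$. The top coefficient of $\operatorname{Wr}(f_1,\dots,f_N)$ (a polynomial in $u$ over $\mathcal O_{\boldsymbol\lambda}$) is a nonzero constant, so each $F_i(u)$ expands as $F_i(u)=\sum_{j\ge1}F_{ij}u^{-j}$ with $F_{ij}\in\mathcal O_{\boldsymbol\lambda}$. *)

theory Defs
  imports "HOL-Computational_Algebra.Polynomial"
          "HOL-Computational_Algebra.Formal_Laurent_Series"
          "Jordan_Normal_Form.Determinant"
begin

text \<open>Partitions with at most N parts, indexed 1..N (values outside are irrelevant).\<close>
definition is_partition :: "nat \<Rightarrow> (nat \<Rightarrow> nat) \<Rightarrow> bool" where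
  "is_partition N lam \<longleftrightarrow> (\<forall>i. 1 \<le> i \<and> i < N \<longrightarrow> lam (Suc i) \<le> lam i)"

definition dseq :: "nat \<Rightarrow> (nat \<Rightarrow> nat) \<Rightarrow> nat \<Rightarrow> nat" where
  "dseq N lam i = lam i + N - i"

definition degset :: "nat \<Rightarrow> (nat \<Rightarrow> nat) \<Rightarrow> nat set" where
  "degset N lam = dseq N lam ` {1..N}"

text \<open>The polynomial f_i(u) with the coordinate f_ij specialised to the complex number c i j.\<close>
definition fpoly :: "nat \<Rightarrow> (nat \<Rightarrow> nat) \<Rightarrow> (nat \<Rightarrow> nat \<Rightarrow> complex) \<Rightarrow> nat \<Rightarrow> complex poly" where
  "fpoly N lam c i =
     monom 1 (dseq N lam i)
     + (\<Sum>j\<in>{j. 1 \<le> j \<and> j \<le> dseq N lam i \<and> dseq N lam i - j \<notin> degset N lam}.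
          monom (c i j) (dseq N lam i - j))"

text \<open>Wronskian Wr(f_1,...,f_N) = det (f_i^{(j-1)}) (0-based indices in the matrix).\<close>
definition wronsk :: "nat \<Rightarrow> (nat \<Rightarrow> complex poly) \<Rightarrow> complex poly" where
  "wronsk N f = det (mat N N (\<lambda>(r, s). (pderiv ^^ s) (f (Suc r))))"

text \<open>Minor of the (N+1)x(N+1) matrix (f_i^{(j)}) obtained by deleting the last row
  (the operator row) and the column of index k (0 \<le> k \<le> N).\<close>
definition wminor :: "nat \<Rightarrow> (nat \<Rightarrow> complex poly) \<Rightarrow> nat \<Rightarrow> complex poly" where
  "wminor N f k = det (mat N N (\<lambda>(r, s). (pderiv ^^ (if s < k then s else Suc s)) (f (Suc r))))"

text \<open>Expansion at u = infinity: a polynomial in u as a Laurent series in t = u^{-1}.\<close>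
definition poly_at_inf :: "complex poly \<Rightarrow> complex fls" where
  "poly_at_inf p = (\<Sum>k\<le>degree p. fls_const (coeff p k) * fls_X_inv ^ k)"

text \<open>Expanding rdet along the last row (the only row with non-commuting entries,
  which stand rightmost in every product) gives
  D = sum_k (-1)^(N+k) (wminor k / Wr) \<partial>^k, hence F_i(u) = (-1)^i wminor (N-i) / Wr.
  F_ij is the coefficient of u^{-j} = t^j of its expansion at infinity.\<close>
definition Fcoef :: "nat \<Rightarrow> (nat \<Rightarrow> nat) \<Rightarrow> (nat \<Rightarrow> nat \<Rightarrow> complex) \<Rightarrow> nat \<Rightarrow> nat \<Rightarrow> complex" where
  "Fcoef N lam c i j =
     fls_nth ((-1) ^ i * poly_at_inf (wminor N (fpoly N lam c) (N - i))
              / poly_at_inf (wronsk N (fpoly N lam c))) (int j)"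

definition chi :: "nat \<Rightarrow> (nat \<Rightarrow> nat) \<Rightarrow> (nat \<Rightarrow> nat \<Rightarrow> complex) \<Rightarrow> complex poly" where
  "chi N lam c =
     (\<Sum>i\<le>N. Polynomial.smult (if i = 0 then 1 else Fcoef N lam c i i)
                   (\<Prod>j<N - i. [:- of_nat j, 1:]))"

end

theory Submission
  imports Defs
begin

definition topc :: "nat \<Rightarrow> 'a::comm_ring_1 \<Rightarrow> 'a poly \<Rightarrow> bool" where
  "topc n a p \<longleftrightarrow> (\<forall>k>n. coeff p k = 0) \<and> coeff p n = a"

lemma topc_mult:
  fixes p q :: "'a::comm_ring_1 poly"
  assumes "topc m a p" "topc n b q" shows "topc (m+n) (a*b) (p*q)"
proof -
  have A: "\<forall>k>m. coeff p k = 0" "coeff p m = a" and B: "\<forall>k>n. coeff q k = 0" "coeff q n = b"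
    using assms by (auto simp: topc_def)
  have 1: "coeff (p*q) k = 0" if "k > m+n" for k
    unfolding coeff_mult
  proof (rule sum.neutral, intro ballI)
    fix i assume "i \<in> {..k}"
    show "coeff p i * coeff q (k - i) = 0"
    proof (cases "i \<le> m")
      case True then have "k - i > n" using that by arith
      thus ?thesis using B by simp
    next
      case False thus ?thesis using A by simp
    qed
  qed
  have 2: "coeff (p*q) (m+n) = a*b"
  proof -
    have "coeff (p*q) (m+n) = coeff p m * coeff q (m+n-m) + (\<Sum>i\<in>{..m+n}-{m}. coeff p i * coeff q (m+n - i))"
      unfolding coeff_mult by (rule sum.remove) auto
    also have "(\<Sum>i\<in>{..m+n}-{m}. coeff p i * coeff q (m+n - i)) = 0"
    proof (rule sum.neutral, intro ballI)
      fix i assume i: "i \<in> {..m+n}-{m}"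
      show "coeff p i * coeff q (m + n - i) = 0"
      proof (cases "i < m")
        case True then have "m + n - i > n" by arith
        thus ?thesis using B by simp
      next
        case False then have "i > m" using i by auto
        thus ?thesis using A by simp
      qed
    qed
    finally show ?thesis using A B by simp
  qed
  show ?thesis using 1 2 by (simp add: topc_def)
qed

lemma topc_one: "topc 0 1 (1::'a::comm_ring_1 poly)"
  by (simp add: topc_def)

lemma topc_sum:
  fixes p :: "'b \<Rightarrow> 'a::comm_ring_1 poly"
  assumes "\<And>x. x \<in> S \<Longrightarrow> topc n (a x) (p x)"
  shows "topc n (\<Sum>x\<in>S. a x) (\<Sum>x\<in>S. p x)"
  using assms by (simp add: topc_def coeff_sum)

lemma topc_prod:
  fixes p :: "'b \<Rightarrow> 'a::comm_ring_1 poly"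
  assumes "finite S" "\<And>x. x \<in> S \<Longrightarrow> topc (n x) (a x) (p x)"
  shows "topc (\<Sum>x\<in>S. n x) (\<Prod>x\<in>S. a x) (\<Prod>x\<in>S. p x)"
  using assms
proof (induction S rule: finite_induct)
  case empty thus ?case by (simp add: topc_one)
next
  case (insert x F)
  thus ?case by (simp add: topc_mult)
qed

lemma topc_of_int:
  fixes p :: "'a::comm_ring_1 poly"
  assumes "topc n a p" shows "topc n (of_int z * a) (of_int z * p)"
  using assms by (simp add: topc_def of_int_poly)

lemma monom_sum: "finite S \<Longrightarrow> monom (1::'a::comm_ring_1) (\<Sum>x\<in>S. f x) = (\<Prod>x\<in>S. monom 1 (f x))"
proof (induction S rule: finite_induct)
  case (insert x F)
  have "monom (1::'a) (f x + sum f F) = monom 1 (f x) * monom 1 (sum f F)" by (simp add: mult_monom)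
  thus ?case using insert by simp
qed (simp add: one_poly_def)

lemma det_top:
  fixes M :: "nat \<Rightarrow> nat \<Rightarrow> 'a::comm_ring_1 poly"
  assumes "\<And>r s. r<n \<Longrightarrow> s<n \<Longrightarrow> topc (a r) (L r s) (monom 1 (b s) * M r s)"
  shows "topc (\<Sum>r<n. a r) (det (mat n n (\<lambda>(r,s). L r s)))
           (monom 1 (\<Sum>s<n. b s) * det (mat n n (\<lambda>(r,s). M r s)))"
proof -
  have eq: "monom 1 (\<Sum>s<n. b s) * det (mat n n (\<lambda>(r,s). M r s)) =
     (\<Sum>p\<in>{p. p permutes {0..<n}}. of_int (sign p) * (\<Prod>i=0..<n. monom 1 (b (p i)) * M i (p i)))"
  proof -
    have "monom 1 (\<Sum>s<n. b s) * det (mat n n (\<lambda>(r,s). M r s)) =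
       (\<Sum>p\<in>{p. p permutes {0..<n}}. of_int (sign p) * (monom 1 (\<Sum>s<n. b s) * (\<Prod>i=0..<n. M i (p i))))"
      unfolding det_def by (simp add: sum_distrib_left algebra_simps)
    also have "\<dots> = (\<Sum>p\<in>{p. p permutes {0..<n}}. of_int (sign p) * (\<Prod>i=0..<n. monom 1 (b (p i)) * M i (p i)))"
    proof (rule sum.cong[OF refl])
      fix p assume "p \<in> {p. p permutes {0..<n}}"
      then have pp: "p permutes {0..<n}" by simp
      have "(\<Sum>s<n. b s) = (\<Sum>i=0..<n. b (p i))"
        using sum.permute[OF pp, of b] by (simp add: atLeast0LessThan)
      then have "monom 1 (\<Sum>s<n. b s) = (\<Prod>i=0..<n. monom (1::'a) (b (p i)))"
        by (simp add: monom_sum)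
      then show "of_int (sign p) * (monom 1 (\<Sum>s<n. b s) * (\<Prod>i=0..<n. M i (p i))) =
           of_int (sign p) * (\<Prod>i=0..<n. monom 1 (b (p i)) * M i (p i))"
        by (simp add: prod.distrib)
    qed
    finally show ?thesis .
  qed
  have "topc (\<Sum>i=0..<n. a i) (\<Sum>p\<in>{p. p permutes {0..<n}}. of_int (sign p) * (\<Prod>i=0..<n. L i (p i)))
      (\<Sum>p\<in>{p. p permutes {0..<n}}. of_int (sign p) * (\<Prod>i=0..<n. monom 1 (b (p i)) * M i (p i)))"
  proof (rule topc_sum, rule topc_of_int, rule topc_prod)
    fix p i assume "p \<in> {p. p permutes {0..<n}}" "i \<in> {0..<n}"
    then show "topc (a i) (L i (p i)) (monom 1 (b (p i)) * M i (p i))"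
      using assms permutes_in_image by fastforce
  qed simp
  then show ?thesis unfolding eq unfolding det_def by (simp add: atLeast0LessThan)
qed


definition ffc :: "complex \<Rightarrow> nat \<Rightarrow> complex" where
  "ffc y s = (\<Prod>j<s. (y - of_nat j))"

definition ffp :: "nat \<Rightarrow> complex poly" where
  "ffp s = (\<Prod>j<s. [:- of_nat j, 1:])"

lemma ffc_pochhammer: "ffc y s = pochhammer (y - of_nat s + 1) s"
proof -
  have "ffc y s = (\<Prod>j<s. (-1) * (- y + of_nat j))"
    unfolding ffc_def by (rule prod.cong) auto
  also have "\<dots> = (\<Prod>j<s. (-1::complex)) * (\<Prod>j<s. (- y + of_nat j))"
    by (rule prod.distrib)
  also have "\<dots> = (-1)^s * pochhammer (- y) s"
    by (simp only: prod_constant card_lessThan pochhammer_prod atLeast0LessThan)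
  also have "\<dots> = pochhammer (y - of_nat s + 1) s"
    by (simp add: pochhammer_minus)
  finally show ?thesis .
qed

lemma ffc_zero: "d < s \<Longrightarrow> ffc (of_nat d) s = 0"
  unfolding ffc_def by (rule prod_zero) auto

lemma entry_top:
  fixes f :: "complex poly"
  assumes "\<forall>k>d. coeff f k = 0" "coeff f d = 1"
  shows "topc d (ffc (of_nat d) s) (monom 1 s * (pderiv^^s) f)"
proof -
  have c: "coeff (monom 1 s * (pderiv^^s) f) k =
      (if k < s then 0 else pochhammer (of_nat (Suc (k - s))) s * coeff f k)" for k
    by (simp add: coeff_monom_mult coeff_higher_pderiv)
  have 1: "coeff (monom 1 s * (pderiv^^s) f) k = 0" if "k > d" for k
    using that assms(1) by (simp add: c)
  have 2: "coeff (monom 1 s * (pderiv^^s) f) d = ffc (of_nat d) s"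
  proof (cases "d < s")
    case True thus ?thesis by (simp add: c ffc_zero)
  next
    case False
    have "coeff (monom 1 s * (pderiv^^s) f) d = pochhammer (of_nat (Suc (d - s))) s * coeff f d"
      using c[of d] False by simp
    also have "\<dots> = ffc (of_nat d) s"
      unfolding ffc_pochhammer using False assms(2) by (simp add: of_nat_diff algebra_simps)
    finally show ?thesis .
  qed
  show ?thesis using 1 2 by (simp add: topc_def)
qed

lemma fpoly_coeff:
  shows "\<forall>k>dseq N lam i. coeff (fpoly N lam c i) k = 0"
    and "coeff (fpoly N lam c i) (dseq N lam i) = 1"
proof -
  let ?d = "dseq N lam i"
  let ?J = "{j. 1 \<le> j \<and> j \<le> ?d \<and> ?d - j \<notin> degset N lam}"
  have z: "(\<Sum>j\<in>?J. coeff (monom (c i j) (?d - j)) k) = 0" if "k \<ge> ?d" for k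
    by (rule sum.neutral) (use that in \<open>auto simp: coeff_monom\<close>)
  show "\<forall>k>?d. coeff (fpoly N lam c i) k = 0"
    using z by (auto simp: fpoly_def coeff_sum coeff_monom)
  show "coeff (fpoly N lam c i) ?d = 1"
    using z[of ?d] by (simp add: fpoly_def coeff_sum coeff_monom)
qed

definition VMk :: "(nat \<Rightarrow> complex) \<Rightarrow> nat \<Rightarrow> nat \<Rightarrow> complex mat" where
  "VMk x n k = mat n n (\<lambda>(r,s). ffc (x r) (if s < k then s else Suc s))"

lemma sum_cm: "(\<Sum>s<n. (if s < k then s else Suc s)) = (\<Sum>s<n. s) + (n - k)"
  by (induction n) auto

lemma W_top:
  fixes N :: nat and lam :: "nat \<Rightarrow> nat"
  defines "x \<equiv> \<lambda>r. of_nat (dseq N lam (Suc r)) :: complex"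
  shows "topc (\<Sum>r<N. dseq N lam (Suc r)) (det (VMk x N N))
           (monom 1 (\<Sum>s<N. s) * wronsk N (fpoly N lam c))"
proof -
  have "topc (\<Sum>r<N. dseq N lam (Suc r)) (det (mat N N (\<lambda>(r,s). ffc (x r) s)))
     (monom 1 (\<Sum>s<N. s) * det (mat N N (\<lambda>(r,s). (pderiv^^s) (fpoly N lam c (Suc r)))))"
    by (rule det_top) (simp add: x_def entry_top fpoly_coeff)
  moreover have "mat N N (\<lambda>(r,s). ffc (x r) s) = VMk x N N"
    unfolding VMk_def by (rule eq_matI) auto
  ultimately show ?thesis by (simp add: wronsk_def)
qed

lemma minor_top:
  fixes N :: nat and lam :: "nat \<Rightarrow> nat"
  defines "x \<equiv> \<lambda>r. of_nat (dseq N lam (Suc r)) :: complex"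
  shows "topc (\<Sum>r<N. dseq N lam (Suc r)) (det (VMk x N k))
           (monom 1 ((\<Sum>s<N. s) + (N - k)) * wminor N (fpoly N lam c) k)"
proof -
  have "topc (\<Sum>r<N. dseq N lam (Suc r)) (det (mat N N (\<lambda>(r,s). ffc (x r) (if s < k then s else Suc s))))
     (monom 1 (\<Sum>s<N. (if s < k then s else Suc s)) *
        det (mat N N (\<lambda>(r,s). (pderiv^^(if s < k then s else Suc s)) (fpoly N lam c (Suc r)))))"
    by (rule det_top) (simp add: x_def entry_top fpoly_coeff)
  then show ?thesis by (simp add: wminor_def VMk_def sum_cm)
qed

lemma PAI_nth: "fls_nth (poly_at_inf p) n = (if n \<le> 0 then coeff p (nat (-n)) else 0)"
proof -
  have "fls_nth (poly_at_inf p) n = (\<Sum>k\<le>degree p. coeff p k * (if n = - int k then 1 else 0))"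
    by (simp add: poly_at_inf_def fls_nth_sum fls_X_inv_power_nth)
  also have "\<dots> = (\<Sum>k\<le>degree p. if k = nat (-n) \<and> n \<le> 0 then coeff p k else 0)"
    by (rule sum.cong) auto
  also have "\<dots> = (if n \<le> 0 then coeff p (nat (-n)) else 0)"
    by (auto simp: coeff_eq_0)
  finally show ?thesis .
qed

lemma top_fls:
  assumes "topc A a (monom 1 m * p)"
  shows "\<forall>n < int m - int A. fls_nth (poly_at_inf p) n = 0"
    and "fls_nth (poly_at_inf p) (int m - int A) = a"
proof -
  have c: "coeff p k = coeff (monom 1 m * p) (k + m)" for k
    by (simp add: coeff_monom_mult)
  have A1: "\<forall>k>A. coeff (monom 1 m * p) k = 0" and A2: "coeff (monom 1 m * p) A = a"
    using assms by (auto simp: topc_def)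
  show "\<forall>n < int m - int A. fls_nth (poly_at_inf p) n = 0"
  proof (intro allI impI)
    fix n :: int assume "n < int m - int A"
    then have "n > 0 \<or> nat (-n) + m > A" by auto
    then show "fls_nth (poly_at_inf p) n = 0"
      using A1 by (auto simp: PAI_nth c)
  qed
  show "fls_nth (poly_at_inf p) (int m - int A) = a"
  proof (cases "m \<le> A")
    case True
    then have "nat (- (int m - int A)) + m = A" by auto
    then show ?thesis using True A2 by (simp add: PAI_nth c)
  next
    case False
    then have "a = 0" using A2 by (simp add: coeff_monom_mult)
    then show ?thesis using False by (simp add: PAI_nth)
  qed
qed

lemma fls_div_nth:
  fixes g h :: "complex fls"
  assumes g0: "\<forall>n<e. fls_nth g n = 0" and g1: "fls_nth g e \<noteq> 0"
    and h0: "\<forall>n<e+i. fls_nth h n = 0"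
  shows "fls_nth (h/g) i = fls_nth h (e+i) / fls_nth g e"
proof (cases "h = 0")
  case True thus ?thesis by simp
next
  case False
  have gnz: "g \<noteq> 0" using g1 by auto
  have sg: "fls_subdegree g = e" using g0 g1 by (intro fls_subdegree_eqI) auto
  have sh: "e + i \<le> fls_subdegree h" using h0 False by (intro fls_subdegree_geI) auto
  define Q where "Q = h / g"
  have Qg: "Q * g = h" using gnz by (simp add: Q_def)
  have Qnz: "Q \<noteq> 0" using False Qg by auto
  have sQ: "fls_subdegree Q = fls_subdegree h - e"
    using False gnz sg by (simp add: Q_def fls_divide_subdegree)
  have prod: "fls_nth h (e+i) = (\<Sum>j = fls_subdegree Q..e + i - e. fls_nth Q j * fls_nth g (e + i - j))"
    using fls_times_nth(2)[of Q g "e+i"] by (simp add: Qg sg)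
  show ?thesis
  proof (cases "fls_subdegree Q = i")
    case True
    then have "fls_nth h (e+i) = fls_nth Q i * fls_nth g e" using prod by simp
    then show ?thesis using g1 by (simp add: Q_def)
  next
    case False
    then have "fls_subdegree Q > i" using sQ sh by auto
    then have "fls_nth Q i = 0" "fls_nth h (e+i) = 0"
      using prod by (auto simp: fls_eq0_below_subdegree)
    then show ?thesis by (simp add: Q_def)
  qed
qed


definition BM :: "(nat \<Rightarrow> complex) \<Rightarrow> nat \<Rightarrow> complex poly mat" where
  "BM x n = mat (Suc n) (Suc n) (\<lambda>(r,s). if r < n then [:ffc (x r) s:] else ffp s)"

lemma hom_const: "comm_ring_hom (\<lambda>a::complex. [:a:])" by unfold_locales simp_all
lemma hom_eval: "comm_ring_hom (\<lambda>p::complex poly. poly p y)" by unfold_locales simp_all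

lemma poly_ffp: "poly (ffp s) y = ffc y s" by (simp add: ffp_def ffc_def poly_prod)

lemma topc_lin: "topc 1 1 [:a, 1::complex:]"
  by (auto simp: topc_def coeff_pCons split: nat.split)

lemma topc_lin'[simp]: "topc (Suc 0) 1 [:a, 1::complex:]"
  using topc_lin by simp

lemma neg1_const: "(-1::complex poly)^m * [:a:] = [:(-1)^m * a:]"
  by (induction m arbitrary: a) simp_all

lemma topc_ffp: "topc s 1 (ffp s)"
  using topc_prod[of "{..<s}" "\<lambda>_. 1" "\<lambda>_. 1" "\<lambda>j. [:- of_nat j, 1::complex:]"]
  by (simp add: ffp_def topc_lin)

lemma topc_lins: "topc n 1 (\<Prod>r<n. [:- x r, 1::complex:])"
  using topc_prod[of "{..<n}" "\<lambda>_. 1" "\<lambda>_. 1" "\<lambda>r. [:- x r, 1::complex:]"]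
  by (simp add: topc_lin)

lemma topc_const_right: "topc k a p \<Longrightarrow> topc k (a * c) (p * [:c:])"
  by (simp add: topc_def)

lemma topc_mono: "topc k a p \<Longrightarrow> k < n \<Longrightarrow> topc n 0 p"
  by (simp add: topc_def)

lemma mat_delete_BM: "k \<le> n \<Longrightarrow> mat_delete (BM x n) n k = map_mat (\<lambda>a. [:a:]) (VMk x n k)"
  by (rule eq_matI) (auto simp: mat_delete_def BM_def VMk_def)

lemma det_BM: "det (BM x n) = (\<Sum>k<Suc n. ffp k * [:(-1)^(n+k) * det (VMk x n k):])"
proof -
  have "det (BM x n) = (\<Sum>k<Suc n. BM x n $$ (n,k) * cofactor (BM x n) n k)"
    by (rule laplace_expansion_row) (auto simp: BM_def)
  also have "\<dots> = (\<Sum>k<Suc n. ffp k * [:(-1)^(n+k) * det (VMk x n k):])"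
  proof (rule sum.cong[OF refl])
    fix k assume "k \<in> {..<Suc n}"
    then have k: "k \<le> n" by simp
    have "cofactor (BM x n) n k = (-1)^(n+k) * [:det (VMk x n k):]"
      using k by (simp add: cofactor_def mat_delete_BM comm_ring_hom.hom_det[OF hom_const])
    also have "\<dots> = [:(-1)^(n+k) * det (VMk x n k):]"
      by (rule neg1_const)
    finally show "BM x n $$ (n,k) * cofactor (BM x n) n k = ffp k * [:(-1)^(n+k) * det (VMk x n k):]"
      using k by (simp add: BM_def)
  qed
  finally show ?thesis .
qed

lemma BM_topc: "topc n (det (VMk x n n)) (det (BM x n))"
proof -
  have "topc n (\<Sum>k<Suc n. if k = n then det (VMk x n n) else 0)
     (\<Sum>k<Suc n. ffp k * [:(-1)^(n+k) * det (VMk x n k):])"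
  proof (rule topc_sum)
    fix k assume "k \<in> {..<Suc n}"
    then have k: "k \<le> n" by simp
    have t: "topc k (1 * ((-1)^(n+k) * det (VMk x n k))) (ffp k * [:(-1)^(n+k) * det (VMk x n k):])"
      by (rule topc_const_right[OF topc_ffp])
    show "topc n (if k = n then det (VMk x n n) else 0) (ffp k * [:(-1)^(n+k) * det (VMk x n k):])"
    proof (cases "k = n")
      case True
      have "(-1::complex)^(n+n) = 1" by (simp flip: mult_2)
      thus ?thesis using t True by simp
    next
      case False with k have "k < n" by simp
      show ?thesis using topc_mono[OF t \<open>k < n\<close>] False by simp
    qed
  qed
  then show ?thesis by (simp add: det_BM)
qed

lemma BM_root: "r < n \<Longrightarrow> poly (det (BM x n)) (x r) = 0"
proof -
  assume r: "r < n"
  let ?A = "map_mat (\<lambda>p. poly p (x r)) (BM x n)"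
  have "poly (det (BM x n)) (x r) = det ?A" by (simp add: comm_ring_hom.hom_det[OF hom_eval])
  also have "det ?A = 0"
    by (rule det_identical_rows[of _ "Suc n" r n]) (use r in \<open>auto simp: BM_def poly_ffp intro!: eq_vecI\<close>)
  finally show ?thesis .
qed

lemma BM_eq:
  assumes inj: "inj_on x {..<n}"
  shows "det (BM x n) = Polynomial.smult (det (VMk x n n)) (\<Prod>r<n. [:- x r, 1:])"
proof -
  define P where "P = det (BM x n) - Polynomial.smult (det (VMk x n n)) (\<Prod>r<n. [:- x r, 1:])"
  have t1: "topc n (det (VMk x n n)) (det (BM x n))" by (rule BM_topc)
  have t2: "topc n 1 (\<Prod>r<n. [:- x r, 1::complex:])" by (rule topc_lins)
  have tP: "topc n 0 P" using t1 t2 by (simp add: topc_def P_def)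
  have roots: "poly P (x r) = 0" if "r < n" for r
    using that BM_root[OF that, of x] by (simp add: P_def poly_prod) (use that in blast)
  show ?thesis
  proof (rule ccontr)
    assume "\<not> ?thesis"
    then have Pnz: "P \<noteq> 0" by (simp add: P_def)
    have "degree P \<le> n" using tP by (auto simp: topc_def intro: degree_le)
    moreover have "degree P \<noteq> n" using tP Pnz by (metis leading_coeff_0_iff topc_def)
    ultimately have dP: "degree P < n" by simp
    have "x ` {..<n} \<subseteq> {y. poly P y = 0}" using roots by auto
    then have "card (x ` {..<n}) \<le> card {y. poly P y = 0}"
      by (rule card_mono[OF poly_roots_finite[OF Pnz]])
    also have "\<dots> \<le> degree P" by (rule card_poly_roots_bound[OF Pnz])
    finally show False using dP card_image[OF inj] by simp
  qed
qed

lemma VM_Suc: "det (VMk x (Suc n) (Suc n)) = poly (det (BM x n)) (x n)"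
proof -
  have "map_mat (\<lambda>p. poly p (x n)) (BM x n) = VMk x (Suc n) (Suc n)"
    by (rule eq_matI) (auto simp: BM_def VMk_def poly_ffp elim: less_SucE)
  then show ?thesis by (metis comm_ring_hom.hom_det[OF hom_eval])
qed

lemma VM_nz: "inj_on x {..<n} \<Longrightarrow> det (VMk x n n) \<noteq> 0"
proof (induction n)
  case 0 thus ?case by (simp add: VMk_def det_def)
next
  case (Suc n)
  have inj: "inj_on x {..<n}" using Suc.prems by (rule inj_on_subset) auto
  have "det (VMk x (Suc n) (Suc n)) = det (VMk x n n) * (\<Prod>r<n. x n - x r)"
    by (simp add: VM_Suc BM_eq[OF inj] poly_prod)
  moreover have "\<forall>r<n. x n \<noteq> x r"
  proof (intro allI impI)
    fix r assume "r < n" then show "x n \<noteq> x r" using inj_onD[OF Suc.prems, of n r] by auto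
  qed
  then have "(\<Prod>r<n. x n - x r) \<noteq> 0" by auto
  ultimately show ?case using Suc.IH[OF inj] by simp
qed


lemma smult_sum_right: "finite A \<Longrightarrow> Polynomial.smult c (\<Sum>x\<in>A. f x) = (\<Sum>x\<in>A. Polynomial.smult c (f x))"
  by (induction A rule: finite_induct) (simp_all add: smult_add_right)

lemma lam_mono:
  assumes "is_partition N lam" "1 \<le> i" "i \<le> j" "j \<le> N"
  shows "lam j \<le> lam i"
  using assms(3,4)
proof (induction j rule: dec_induct)
  case base thus ?case by simp
next
  case (step j)
  have "lam (Suc j) \<le> lam j" using assms(1,2) step by (simp add: is_partition_def)
  thus ?case using step by simp
qed

lemma x_inj:
  assumes "is_partition N lam"
  shows "inj_on (\<lambda>r. of_nat (dseq N lam (Suc r)) :: complex) {..<N}"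
proof (rule inj_onI)
  fix r r' assume r: "r \<in> {..<N}" and r': "r' \<in> {..<N}"
    and eq: "(of_nat (dseq N lam (Suc r)) :: complex) = of_nat (dseq N lam (Suc r'))"
  have eq': "dseq N lam (Suc r) = dseq N lam (Suc r')" using eq by simp
  have lt: "dseq N lam (Suc b) < dseq N lam (Suc a)" if "a < b" "b < N" for a b
  proof -
    have "lam (Suc b) \<le> lam (Suc a)" using lam_mono[OF assms, of "Suc a" "Suc b"] that by simp
    thus ?thesis using that by (simp add: dseq_def)
  qed
  show "r = r'"
  proof (rule ccontr)
    assume "r \<noteq> r'"
    then have "r < r' \<or> r' < r" by arith
    thus False using lt r r' eq' by (metis lessThan_iff less_irrefl)
  qed
qed

lemma Fcoef_eq:
  fixes N :: nat and lam :: "nat \<Rightarrow> nat"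
  defines "x \<equiv> \<lambda>r. of_nat (dseq N lam (Suc r)) :: complex"
  assumes Vnz: "det (VMk x N N) \<noteq> 0" and i: "i \<le> N"
  shows "Fcoef N lam c i i = (-1)^i * det (VMk x N (N - i)) / det (VMk x N N)"
proof -
  let ?A = "\<Sum>r<N. dseq N lam (Suc r)"
  let ?S = "\<Sum>s<N. s"
  define g where "g = poly_at_inf (wronsk N (fpoly N lam c))"
  define h0 where "h0 = poly_at_inf (wminor N (fpoly N lam c) (N - i))"
  define e where "e = int ?S - int ?A"
  have tW: "topc ?A (det (VMk x N N)) (monom 1 ?S * wronsk N (fpoly N lam c))"
    unfolding x_def by (rule W_top)
  have tM: "topc ?A (det (VMk x N (N-i))) (monom 1 (?S + i) * wminor N (fpoly N lam c) (N - i))"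
    using minor_top[of N lam "N - i" c] i by (simp add: x_def)
  have g0: "\<forall>n<e. fls_nth g n = 0" and g1: "fls_nth g e = det (VMk x N N)"
    using top_fls[OF tW] by (simp_all add: g_def e_def)
  have h00: "\<forall>n<e + int i. fls_nth h0 n = 0" and h01: "fls_nth h0 (e + int i) = det (VMk x N (N-i))"
    using top_fls[OF tM] by (simp_all add: h0_def e_def algebra_simps)
  have hn: "fls_nth ((-1)^i * h0) n = (-1)^i * fls_nth h0 n" for n
  proof -
    have "((-1)^i :: complex fls) = of_int ((-1)^i)" by simp
    then show ?thesis by (simp only: fls_mult_of_int_nth) simp
  qed
  have "Fcoef N lam c i i = fls_nth (((-1)^i * h0) / g) (int i)"
    by (simp add: Fcoef_def g_def h0_def)
  also have "\<dots> = fls_nth ((-1)^i * h0) (e + int i) / fls_nth g e"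
    by (rule fls_div_nth) (use g0 g1 Vnz h00 hn in auto)
  also have "\<dots> = (-1)^i * det (VMk x N (N - i)) / det (VMk x N N)"
    by (simp add: hn h01 g1)
  finally show ?thesis .
qed

theorem lemma3p3:
  fixes N :: nat and lam :: "nat \<Rightarrow> nat" and c :: "nat \<Rightarrow> nat \<Rightarrow> complex"
  assumes "is_partition N lam"
  shows "chi N lam c = (\<Prod>i\<in>{1..N}. [:- of_nat (dseq N lam i), 1:])"
proof -
  define x where "x = (\<lambda>r. of_nat (dseq N lam (Suc r)) :: complex)"
  define V where "V = det (VMk x N N)"
  have inj: "inj_on x {..<N}" unfolding x_def by (rule x_inj[OF assms])
  have Vnz: "V \<noteq> 0" unfolding V_def by (rule VM_nz[OF inj])
  have coef: "(if i = 0 then 1 else Fcoef N lam c i i) = (-1)^i * det (VMk x N (N - i)) / V"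
    if "i \<le> N" for i
    using Fcoef_eq[of N lam i c] that Vnz by (simp add: x_def V_def)
  have "chi N lam c = (\<Sum>i\<le>N. Polynomial.smult ((-1)^i * det (VMk x N (N - i)) / V) (ffp (N - i)))"
    unfolding chi_def ffp_def by (rule sum.cong) (simp_all add: coef)
  also have "\<dots> = Polynomial.smult (1 / V)
      (\<Sum>i\<le>N. Polynomial.smult ((-1)^i * det (VMk x N (N - i))) (ffp (N - i)))"
    unfolding smult_sum_right[OF finite_atMost] by (rule sum.cong) (simp_all add: smult_smult)
  also have "(\<Sum>i\<le>N. Polynomial.smult ((-1)^i * det (VMk x N (N - i))) (ffp (N - i))) = det (BM x N)"
  proof -
    have "det (BM x N) = (\<Sum>k<Suc N. ffp k * [:(-1)^(N+k) * det (VMk x N k):])" by (rule det_BM)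
    also have "\<dots> = (\<Sum>i<Suc N. ffp (N - i) * [:(-1)^(N+(N-i)) * det (VMk x N (N - i)):])"
      using sum.nat_diff_reindex[of "\<lambda>k. ffp k * [:(-1)^(N+k) * det (VMk x N k):]" "Suc N"] by simp
    also have "\<dots> = (\<Sum>i\<le>N. Polynomial.smult ((-1)^i * det (VMk x N (N - i))) (ffp (N - i)))"
    proof (rule sum.cong)
      fix i assume "i \<in> {..N}"
      then have e: "N + (N - i) = i + 2 * (N - i)" by auto
      have "(-1::complex)^(N+(N-i)) = (-1)^(i + 2 * (N - i))" by (simp only: e)
      also have "\<dots> = (-1)^i" by (simp add: power_add power_mult)
      finally have "(-1::complex)^(N+(N-i)) = (-1)^i" .
      then show "ffp (N - i) * [:(-1)^(N+(N-i)) * det (VMk x N (N - i)):] =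
           Polynomial.smult ((-1)^i * det (VMk x N (N - i))) (ffp (N - i))" by simp
    qed auto
    finally show ?thesis by simp
  qed
  also have "det (BM x N) = Polynomial.smult V (\<Prod>r<N. [:- x r, 1:])"
    unfolding V_def by (rule BM_eq[OF inj])
  also have "Polynomial.smult (1 / V) (Polynomial.smult V (\<Prod>r<N. [:- x r, 1:])) = (\<Prod>r<N. [:- x r, 1:])"
    using Vnz by simp
  also have "\<dots> = (\<Prod>i\<in>{1..N}. [:- of_nat (dseq N lam i), 1:])"
    by (simp add: x_def prod.atLeast1_atMost_eq)
  finally show ?thesis .
qed

end
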